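(* Let $S$ be a semigroup with finite $\mathcal{R}$-height, and let $B$ be a bi-ideal of $S$ in which every element has a local right identity in $B$ (i.e. for every $b\in B$ there is $u\in B$ with $b=bu$). Then $\mathrm{H}_{\mathcal{R}}(B)=n$, where $n$ is the maximal length of a chain of $\mathcal{R}$-classes of $S$ each of which intersects $B$.
   Context: For a semigroup $S$, $S^1$ denotes $S$ with an identity adjoined if necessary. Green's preorder: $a\leq_{\mathcal{R}} b$ iff $aS^1\subseteq bS^1$; $\mathcal{R}$ is the associated equivalence. $\mathcal{R}$-classes are ordered by $R_a\leq R_b$ iff $a\leq_{\mathcal{R}} b$, and the $\mathcal{R}$-height $\mathrm{H}_{\mathcal{R}}$ is the supremum of the cardinalities of chains of $\mathcal{R}$-classes. A bi-ideal of $S$ is a non-empty subset $B$ with $BS^1B\subseteq B$; $\mathrm{H}_{\mathcal{R}}(B)$ is computed in the semigroup $B$ itself. *)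

theory Defs
  imports Main "HOL-Library.Extended_Nat"
begin

definition semigroup_on :: "'a set \<Rightarrow> ('a \<Rightarrow> 'a \<Rightarrow> 'a) \<Rightarrow> bool" where
  "semigroup_on S f \<longleftrightarrow> (\<forall>a\<in>S. \<forall>b\<in>S. f a b \<in> S) \<and>
     (\<forall>a\<in>S. \<forall>b\<in>S. \<forall>c\<in>S. f (f a b) c = f a (f b c))"

definition right_ideal1 :: "'a set \<Rightarrow> ('a \<Rightarrow> 'a \<Rightarrow> 'a) \<Rightarrow> 'a \<Rightarrow> 'a set" where
  "right_ideal1 S f a = insert a ((\<lambda>t. f a t) ` S)"

definition R_le :: "'a set \<Rightarrow> ('a \<Rightarrow> 'a \<Rightarrow> 'a) \<Rightarrow> 'a \<Rightarrow> 'a \<Rightarrow> bool" where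
  "R_le S f a b \<longleftrightarrow> right_ideal1 S f a \<subseteq> right_ideal1 S f b"

definition R_class :: "'a set \<Rightarrow> ('a \<Rightarrow> 'a \<Rightarrow> 'a) \<Rightarrow> 'a \<Rightarrow> 'a set" where
  "R_class S f a = {b \<in> S. R_le S f a b \<and> R_le S f b a}"

definition R_classes :: "'a set \<Rightarrow> ('a \<Rightarrow> 'a \<Rightarrow> 'a) \<Rightarrow> 'a set set" where
  "R_classes S f = R_class S f ` S"

definition R_class_le :: "'a set \<Rightarrow> ('a \<Rightarrow> 'a \<Rightarrow> 'a) \<Rightarrow> 'a set \<Rightarrow> 'a set \<Rightarrow> bool" where
  "R_class_le S f X Y \<longleftrightarrow> (\<exists>a\<in>S. \<exists>b\<in>S. X = R_class S f a \<and> Y = R_class S f b \<and> R_le S f a b)"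

definition R_chain :: "'a set \<Rightarrow> ('a \<Rightarrow> 'a \<Rightarrow> 'a) \<Rightarrow> 'a set set \<Rightarrow> bool" where
  "R_chain S f C \<longleftrightarrow> C \<subseteq> R_classes S f \<and>
     (\<forall>X\<in>C. \<forall>Y\<in>C. R_class_le S f X Y \<or> R_class_le S f Y X)"

(* R-height: supremum of cardinalities of chains of R-classes (infinite chains give \<infinity>,
   since they contain finite subchains of every size) *)
definition R_height :: "'a set \<Rightarrow> ('a \<Rightarrow> 'a \<Rightarrow> 'a) \<Rightarrow> enat" where
  "R_height S f = Sup {enat (card C) | C. finite C \<and> R_chain S f C}"

definition bi_ideal :: "'a set \<Rightarrow> ('a \<Rightarrow> 'a \<Rightarrow> 'a) \<Rightarrow> 'a set \<Rightarrow> bool" where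
  "bi_ideal S f B \<longleftrightarrow> B \<noteq> {} \<and> B \<subseteq> S \<and>
     (\<forall>b\<in>B. \<forall>b'\<in>B. f b b' \<in> B \<and> (\<forall>s\<in>S. f (f b s) b' \<in> B))"

end

theory Submission
  imports Defs
begin

lemma R_le_iff_mem:
  assumes sg: "semigroup_on T f" and a: "a \<in> T" and b: "b \<in> T"
  shows "R_le T f a b \<longleftrightarrow> a \<in> right_ideal1 T f b"
proof
  assume "R_le T f a b" thus "a \<in> right_ideal1 T f b"
    unfolding R_le_def right_ideal1_def by blast
next
  assume h: "a \<in> right_ideal1 T f b"
  show "R_le T f a b" unfolding R_le_def
  proof
    fix x assume x: "x \<in> right_ideal1 T f a"
    show "x \<in> right_ideal1 T f b"
    proof (cases "a = b")
      case True thus ?thesis using x by simp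
    next
      case False
      then obtain s where s: "s \<in> T" "a = f b s" using h unfolding right_ideal1_def by auto
      show ?thesis
      proof (cases "x = a")
        case True thus ?thesis using h by simp
      next
        case False
        then obtain t where t: "t \<in> T" "x = f a t" using x unfolding right_ideal1_def by auto
        have "x = f b (f s t)" using sg s t b unfolding semigroup_on_def by simp
        moreover have "f s t \<in> T" using sg s t unfolding semigroup_on_def by simp
        ultimately show ?thesis unfolding right_ideal1_def by blast
      qed
    qed
  qed
qed

lemma R_le_refl: "R_le T f a a" unfolding R_le_def by simp

lemma R_le_trans: "R_le T f a b \<Longrightarrow> R_le T f b c \<Longrightarrow> R_le T f a c"
  unfolding R_le_def by blast

lemma R_class_eq_iff:
  assumes "a \<in> T" "b \<in> T"
  shows "R_class T f a = R_class T f b \<longleftrightarrow> (R_le T f a b \<and> R_le T f b a)"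
proof
  assume h: "R_class T f a = R_class T f b"
  have "b \<in> R_class T f b" using assms unfolding R_class_def by (simp add: R_le_refl)
  thus "R_le T f a b \<and> R_le T f b a" using h unfolding R_class_def by auto
next
  assume "R_le T f a b \<and> R_le T f b a"
  thus "R_class T f a = R_class T f b" unfolding R_class_def
    by (blast intro: R_le_trans)
qed

lemma R_class_mem: "a \<in> T \<Longrightarrow> a \<in> R_class T f a"
  unfolding R_class_def by (simp add: R_le_refl)

lemma R_class_of_mem:
  assumes "s \<in> T" "a \<in> R_class T f s"
  shows "R_class T f a = R_class T f s"
proof -
  have "a \<in> T" "R_le T f s a" "R_le T f a s" using assms(2) unfolding R_class_def by auto
  thus ?thesis using R_class_eq_iff[of a T s f] assms(1) by blast
qed

lemma R_class_le_iff:
  assumes "a \<in> T" "b \<in> T"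
  shows "R_class_le T f (R_class T f a) (R_class T f b) \<longleftrightarrow> R_le T f a b"
proof
  assume "R_class_le T f (R_class T f a) (R_class T f b)"
  then obtain a' b' where ab: "a' \<in> T" "b' \<in> T" "R_class T f a = R_class T f a'"
    "R_class T f b = R_class T f b'" "R_le T f a' b'" unfolding R_class_le_def by blast
  have "R_le T f a a'" using R_class_eq_iff[of a T a' f] ab(1,3) assms(1) by blast
  moreover have "R_le T f b' b" using R_class_eq_iff[of b T b' f] ab(2,4) assms(2) by blast
  ultimately show "R_le T f a b" using ab(5) by (blast intro: R_le_trans)
next
  assume "R_le T f a b" thus "R_class_le T f (R_class T f a) (R_class T f b)"
    unfolding R_class_le_def using assms by blast
qed

lemma key:
  assumes sg: "semigroup_on S f" and bi: "bi_ideal S f B"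
    and li: "\<forall>b\<in>B. \<exists>u\<in>B. b = f b u"
    and a: "a \<in> B" and b: "b \<in> B"
  shows "R_le B f a b \<longleftrightarrow> R_le S f a b"
proof -
  have BS: "B \<subseteq> S" using bi unfolding bi_ideal_def by simp
  have A: "\<And>x y z. x \<in> S \<Longrightarrow> y \<in> S \<Longrightarrow> z \<in> S \<Longrightarrow> f (f x y) z = f x (f y z)"
    using sg unfolding semigroup_on_def by blast
  have Cl: "\<And>x y. x \<in> S \<Longrightarrow> y \<in> S \<Longrightarrow> f x y \<in> S"
    using sg unfolding semigroup_on_def by blast
  have ClB: "\<And>x y. x \<in> B \<Longrightarrow> y \<in> B \<Longrightarrow> f x y \<in> B"
    using bi unfolding bi_ideal_def by blast
  have sgB: "semigroup_on B f" unfolding semigroup_on_def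
  proof (intro conjI ballI)
    fix x y assume "x \<in> B" "y \<in> B" thus "f x y \<in> B" by (rule ClB)
  next
    fix x y z assume "x \<in> B" "y \<in> B" "z \<in> B"
    thus "f (f x y) z = f x (f y z)" using A BS by blast
  qed
  have aS: "a \<in> S" and bS: "b \<in> S" using a b BS by auto
  show ?thesis
  proof
    assume "R_le B f a b"
    hence "a \<in> right_ideal1 B f b" using R_le_iff_mem[OF sgB a b] by simp
    hence "a \<in> right_ideal1 S f b" using BS unfolding right_ideal1_def by auto
    thus "R_le S f a b" using R_le_iff_mem[OF sg aS bS] by simp
  next
    assume "R_le S f a b"
    hence h: "a \<in> right_ideal1 S f b" using R_le_iff_mem[OF sg aS bS] by simp
    have "a \<in> right_ideal1 B f b"
    proof (cases "a = b")
      case True thus ?thesis unfolding right_ideal1_def by simp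
    next
      case False
      then obtain s where s: "s \<in> S" "a = f b s" using h unfolding right_ideal1_def by auto
      obtain u where u: "u \<in> B" "a = f a u" using li a by blast
      obtain v where v: "v \<in> B" "b = f b v" using li b by blast
      have uS: "u \<in> S" and vS: "v \<in> S" using u v BS by auto
      have "a = f (f (f b v) s) u" using u v s by simp
      also have "\<dots> = f (f b (f v s)) u" using A[OF bS vS s(1)] by simp
      also have "\<dots> = f b (f (f v s) u)" using A[OF bS Cl[OF vS s(1)] uS] .
      finally have e: "a = f b (f (f v s) u)" .
      have "f (f v s) u \<in> B" using bi v(1) u(1) s(1) unfolding bi_ideal_def by blast
      thus ?thesis using e unfolding right_ideal1_def by blast
    qed
    thus "R_le B f a b" using R_le_iff_mem[OF sgB a b] by simp
  qed
qed

theorem proposition3p5: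
  fixes S B :: "'a set" and f :: "'a \<Rightarrow> 'a \<Rightarrow> 'a"
  assumes "semigroup_on S f"
    and "R_height S f \<noteq> \<infinity>"
    and "bi_ideal S f B"
    and "\<forall>b\<in>B. \<exists>u\<in>B. b = f b u"
  shows "R_height B f =
    Sup {enat (card C) | C. finite C \<and> R_chain S f C \<and> (\<forall>X\<in>C. X \<inter> B \<noteq> {})}"
proof -
  note sg = assms(1) and bi = assms(3) and li = assms(4)
  have BS: "B \<subseteq> S" using bi unfolding bi_ideal_def by simp
  have K: "\<And>a b. a \<in> B \<Longrightarrow> b \<in> B \<Longrightarrow> R_le B f a b \<longleftrightarrow> R_le S f a b"
    using key[OF sg bi li] by blast
  have CB: "\<And>a b. a \<in> B \<Longrightarrow> b \<in> B \<Longrightarrow> R_class B f a = R_class B f b \<longleftrightarrow> R_class S f a = R_class S f b"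
  proof -
    fix a b assume ab: "a \<in> B" "b \<in> B"
    hence "a \<in> S" "b \<in> S" using BS by auto
    thus "R_class B f a = R_class B f b \<longleftrightarrow> R_class S f a = R_class S f b"
      using R_class_eq_iff[OF ab, of f] R_class_eq_iff[of a S b f] K[OF ab] K[OF ab(2) ab(1)] by simp
  qed
  have CLB: "\<And>a b. a \<in> B \<Longrightarrow> b \<in> B \<Longrightarrow> R_class_le B f (R_class B f a) (R_class B f b) \<longleftrightarrow> R_class_le S f (R_class S f a) (R_class S f b)"
  proof -
    fix a b assume ab: "a \<in> B" "b \<in> B"
    hence "a \<in> S" "b \<in> S" using BS by auto
    thus "R_class_le B f (R_class B f a) (R_class B f b) \<longleftrightarrow> R_class_le S f (R_class S f a) (R_class S f b)"
      using R_class_le_iff[OF ab, of f] R_class_le_iff[of a S b f] K[OF ab] by simp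
  qed
  define rB where "rB X = (SOME a. a \<in> X \<inter> B)" for X :: "'a set"
  have "{enat (card C) | C. finite C \<and> R_chain B f C} =
    {enat (card C) | C. finite C \<and> R_chain S f C \<and> (\<forall>X\<in>C. X \<inter> B \<noteq> {})}"
  proof (intro equalityI subsetI)
    fix n assume "n \<in> {enat (card C) | C. finite C \<and> R_chain B f C}"
    then obtain C where C: "n = enat (card C)" "finite C" "R_chain B f C" by blast
    define k where "k X = R_class S f (rB X)" for X
    have rep: "\<And>X. X \<in> C \<Longrightarrow> rB X \<in> B \<and> R_class B f (rB X) = X"
    proof -
      fix X assume "X \<in> C"
      then obtain a where a: "a \<in> B" "X = R_class B f a" using C(3)
        unfolding R_chain_def R_classes_def by blast
      hence "a \<in> X \<inter> B" using R_class_mem[of a B f] by blast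
      hence "rB X \<in> X \<inter> B" unfolding rB_def by (rule someI)
      thus "rB X \<in> B \<and> R_class B f (rB X) = X" using a R_class_of_mem[OF a(1), of "rB X"] by simp
    qed
    have inj: "inj_on k C"
    proof (rule inj_onI)
      fix X Y assume "X \<in> C" "Y \<in> C" "k X = k Y"
      thus "X = Y" using rep[of X] rep[of Y] CB[of "rB X" "rB Y"] unfolding k_def by simp
    qed
    have "finite (k ` C) \<and> R_chain S f (k ` C) \<and> (\<forall>X\<in>k ` C. X \<inter> B \<noteq> {})"
    proof (intro conjI)
      show "finite (k ` C)" using C by simp
      show "R_chain S f (k ` C)" unfolding R_chain_def
      proof (intro conjI ballI)
        show "k ` C \<subseteq> R_classes S f"
        proof
          fix Y assume "Y \<in> k ` C"
          then obtain X where X: "X \<in> C" "Y = k X" by blast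
          have "rB X \<in> S" using rep[OF X(1)] BS by blast
          thus "Y \<in> R_classes S f" unfolding X(2) k_def R_classes_def by (rule imageI)
        qed
      next
        fix X Y assume "X \<in> k ` C" "Y \<in> k ` C"
        then obtain X' Y' where XY: "X' \<in> C" "Y' \<in> C" "X = k X'" "Y = k Y'" by blast
        have "R_class_le B f X' Y' \<or> R_class_le B f Y' X'" using C(3) XY unfolding R_chain_def by blast
        thus "R_class_le S f X Y \<or> R_class_le S f Y X"
          using CLB[of "rB X'" "rB Y'"] CLB[of "rB Y'" "rB X'"] rep[of X'] rep[of Y'] XY unfolding k_def by simp
      qed
      show "\<forall>X\<in>k ` C. X \<inter> B \<noteq> {}"
      proof
        fix Y assume "Y \<in> k ` C"
        then obtain X where X: "X \<in> C" "Y = k X" by blast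
        have "rB X \<in> B" using rep[OF X(1)] by blast
        moreover hence "rB X \<in> Y" using X(2) BS R_class_mem[of "rB X" S f] unfolding k_def by blast
        ultimately show "Y \<inter> B \<noteq> {}" by blast
      qed
    qed
    moreover have "card (k ` C) = card C" using inj by (simp add: card_image)
    ultimately show "n \<in> {enat (card C) | C. finite C \<and> R_chain S f C \<and> (\<forall>X\<in>C. X \<inter> B \<noteq> {})}"
      using C(1) by (intro CollectI exI[of _ "k ` C"]) simp
  next
    fix n assume "n \<in> {enat (card C) | C. finite C \<and> R_chain S f C \<and> (\<forall>X\<in>C. X \<inter> B \<noteq> {})}"
    then obtain C where C: "n = enat (card C)" "finite C" "R_chain S f C" "\<forall>X\<in>C. X \<inter> B \<noteq> {}" by blast
    define h where "h X = R_class B f (rB X)" for X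
    have rep: "\<And>X. X \<in> C \<Longrightarrow> rB X \<in> B \<and> R_class S f (rB X) = X"
    proof -
      fix X assume X: "X \<in> C"
      then obtain s where s: "s \<in> S" "X = R_class S f s" using C(3)
        unfolding R_chain_def R_classes_def by blast
      obtain a where "a \<in> X \<inter> B" using C(4) X by blast
      hence "rB X \<in> X \<inter> B" unfolding rB_def by (rule someI)
      thus "rB X \<in> B \<and> R_class S f (rB X) = X" using s R_class_of_mem[OF s(1), of "rB X"] by simp
    qed
    have inj: "inj_on h C"
    proof (rule inj_onI)
      fix X Y assume "X \<in> C" "Y \<in> C" "h X = h Y"
      thus "X = Y" using rep[of X] rep[of Y] CB[of "rB X" "rB Y"] unfolding h_def by simp
    qed
    have "finite (h ` C) \<and> R_chain B f (h ` C)"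
    proof (intro conjI)
      show "finite (h ` C)" using C by simp
      show "R_chain B f (h ` C)" unfolding R_chain_def
      proof (intro conjI ballI)
        show "h ` C \<subseteq> R_classes B f"
        proof
          fix Y assume "Y \<in> h ` C"
          then obtain X where X: "X \<in> C" "Y = h X" by blast
          have "rB X \<in> B" using rep[OF X(1)] by blast
          thus "Y \<in> R_classes B f" unfolding X(2) h_def R_classes_def by (rule imageI)
        qed
      next
        fix X Y assume "X \<in> h ` C" "Y \<in> h ` C"
        then obtain X' Y' where XY: "X' \<in> C" "Y' \<in> C" "X = h X'" "Y = h Y'" by blast
        have "R_class_le S f X' Y' \<or> R_class_le S f Y' X'" using C(3) XY unfolding R_chain_def by blast
        thus "R_class_le B f X Y \<or> R_class_le B f Y X"
          using CLB[of "rB X'" "rB Y'"] CLB[of "rB Y'" "rB X'"] rep[of X'] rep[of Y'] XY unfolding h_def by simp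
      qed
    qed
    moreover have "card (h ` C) = card C" using inj by (simp add: card_image)
    ultimately show "n \<in> {enat (card C) | C. finite C \<and> R_chain B f C}"
      using C(1) by (intro CollectI exI[of _ "h ` C"]) simp
  qed
  thus ?thesis unfolding R_height_def by simp
qed

end
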